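(* Every $6$-dimensional real $2$-step nilpotent Lie algebra $\mathfrak{n}$ admits a complex structure. Moreover, $\mathfrak{n}$ admits a $3$-step complex structure if and only if $\mathfrak{n}$ is isomorphic to $\mathfrak{f}_3$, and every complex structure on $\mathfrak{f}_3$ is $3$-step.
   Context: $\mathfrak{f}_3$ is the free $2$-step nilpotent Lie algebra of rank $3$: $\mathfrak{f}_3=V\oplus\Lambda^2(V)$ with $\dim V=3$, bracket $[v,w]=v\wedge w$ for $v,w\in V$, and $\Lambda^2(V)$ central (equivalently, it has a basis $e_1,\dots,e_6$ with $[e_1,e_2]=e_4$, $[e_1,e_3]=e_5$, $[e_2,e_3]=e_6$). A complex structure on a real Lie algebra $\mathfrak{g}$ is a linear map $J:\mathfrak{g}\to\mathfrak{g}$ with $J^2=-I$ and $N_J(x,y):=[x,y]+J([Jx,y]+[x,Jy])-[Jx,Jy]=0$ for all $x,y\in\mathfrak{g}$. Given such $J$, define inductively $\mathfrak{a}_0(J)=0$ and $\mathfrak{a}_\ell(J)=\{x\in\mathfrak{g}: [x,\mathfrak{g}]\subset\mathfrak{a}_{\ell-1}(J)\text{ and }[Jx,\mathfrak{g}]\subset\mathfrak{a}_{\ell-1}(J)\}$ for $\ell\ge1$. $J$ is called nilpotent if $\mathfrak{a}_t(J)=\mathfrak{g}$ for some positive integer $t$, and $t$-step if $t$ is the smallest such integer. *)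

theory Defs
  imports "HOL-Analysis.Analysis"
begin

definition lie_algebra :: "('v::real_vector \<Rightarrow> 'v \<Rightarrow> 'v) \<Rightarrow> bool" where
  "lie_algebra br \<longleftrightarrow> bilinear br \<and> (\<forall>x. br x x = 0) \<and>
     (\<forall>x y z. br x (br y z) + br y (br z x) + br z (br x y) = 0)"

definition two_step_nilpotent :: "('v::real_vector \<Rightarrow> 'v \<Rightarrow> 'v) \<Rightarrow> bool" where
  "two_step_nilpotent br \<longleftrightarrow> (\<forall>x y z. br (br x y) z = 0) \<and> (\<exists>x y. br x y \<noteq> 0)"

text \<open>Complex structure: J^2 = -I and vanishing Nijenhuis tensor.\<close>
definition complex_structure :: "('v::real_vector \<Rightarrow> 'v \<Rightarrow> 'v) \<Rightarrow> ('v \<Rightarrow> 'v) \<Rightarrow> bool" where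
  "complex_structure br J \<longleftrightarrow> linear J \<and> (\<forall>x. J (J x) = - x) \<and>
     (\<forall>x y. br x y + J (br (J x) y + br x (J y)) - br (J x) (J y) = 0)"

fun asc_series :: "('v::real_vector \<Rightarrow> 'v \<Rightarrow> 'v) \<Rightarrow> ('v \<Rightarrow> 'v) \<Rightarrow> nat \<Rightarrow> 'v set" where
  "asc_series br J 0 = {0}"
| "asc_series br J (Suc l) =
     {x. (\<forall>y. br x y \<in> asc_series br J l) \<and> (\<forall>y. br (J x) y \<in> asc_series br J l)}"

definition nilpotent_cs :: "('v::real_vector \<Rightarrow> 'v \<Rightarrow> 'v) \<Rightarrow> ('v \<Rightarrow> 'v) \<Rightarrow> bool" where
  "nilpotent_cs br J \<longleftrightarrow> (\<exists>t>0. asc_series br J t = UNIV)"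

definition step_cs :: "('v::real_vector \<Rightarrow> 'v \<Rightarrow> 'v) \<Rightarrow> ('v \<Rightarrow> 'v) \<Rightarrow> nat \<Rightarrow> bool" where
  "step_cs br J t \<longleftrightarrow> t > 0 \<and> asc_series br J t = UNIV \<and>
     (\<forall>s. 0 < s \<and> s < t \<longrightarrow> asc_series br J s \<noteq> UNIV)"

definition lie_isomorphic :: "('v::real_vector \<Rightarrow> 'v \<Rightarrow> 'v) \<Rightarrow> ('w::real_vector \<Rightarrow> 'w \<Rightarrow> 'w) \<Rightarrow> bool" where
  "lie_isomorphic br1 br2 \<longleftrightarrow> (\<exists>f. linear f \<and> bij f \<and> (\<forall>x y. f (br1 x y) = br2 (f x) (f y)))"

text \<open>f_3 = V \<oplus> \<Lambda>^2 V, realized on real^3 \<times> real^3: with e1,e2,e3 the basis of the first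
factor and e4,e5,e6 the basis of the second, [e1,e2]=e4, [e1,e3]=e5, [e2,e3]=e6.\<close>
definition f3_bracket :: "((real^3) \<times> (real^3)) \<Rightarrow> ((real^3) \<times> (real^3)) \<Rightarrow> ((real^3) \<times> (real^3))" where
  "f3_bracket p q = (let v = fst p; w = fst q in
     (0, vector [v$1 * w$2 - v$2 * w$1, v$1 * w$3 - v$3 * w$1, v$2 * w$3 - v$3 * w$2]))"

end

theory Submission
  imports Defs
begin


lemma span_ins_iff: "x \<in> span (insert a S) \<longleftrightarrow> (\<exists>k y. y \<in> span S \<and> x = k *\<^sub>R a + y)"
  unfolding span_breakdown_eq by (metis add_diff_cancel_left' diff_add_cancel add.commute)

lemma span1_iff: "x \<in> span {a} \<longleftrightarrow> (\<exists>k. x = k *\<^sub>R a)"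
  by (auto simp: span_singleton)

lemma span2_iff: "x \<in> span {a,b} \<longleftrightarrow> (\<exists>k1 k2. x = k1 *\<^sub>R a + k2 *\<^sub>R b)"
  unfolding span_ins_iff[of x a] span1_iff by blast

lemma span3_iff: "x \<in> span {a,b,c} \<longleftrightarrow> (\<exists>k1 k2 k3. x = k1 *\<^sub>R a + k2 *\<^sub>R b + k3 *\<^sub>R c)"
  unfolding span_ins_iff[of x a] span2_iff by (auto simp: add.assoc)

lemma span4_iff: "x \<in> span {a,b,c,d} \<longleftrightarrow> (\<exists>k1 k2 k3 k4. x = k1 *\<^sub>R a + k2 *\<^sub>R b + k3 *\<^sub>R c + k4 *\<^sub>R d)"
  unfolding span_ins_iff[of x a] span3_iff by (auto simp: add.assoc; blast)

locale tsn =
  fixes br :: "'v::euclidean_space \<Rightarrow> 'v \<Rightarrow> 'v"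
  assumes bil: "bilinear br" and alt: "\<And>x. br x x = 0" and nil2: "\<And>x y z. br (br x y) z = 0"
begin

lemma bb: "bounded_bilinear br" using bil bilinear_conv_bounded_bilinear by blast

lemmas brs = bounded_bilinear.add_left[OF bb] bounded_bilinear.add_right[OF bb]
  bounded_bilinear.scaleR_left[OF bb] bounded_bilinear.scaleR_right[OF bb]
  bounded_bilinear.minus_left[OF bb] bounded_bilinear.minus_right[OF bb]
  bounded_bilinear.diff_left[OF bb] bounded_bilinear.diff_right[OF bb]
  bounded_bilinear.zero_left[OF bb] bounded_bilinear.zero_right[OF bb]

lemma anti: "br y x = - br x y"
proof -
  have "br (x+y) (x+y) = br x x + br y x + (br x y + br y y)" by (simp only: brs)
  then have "br x y + br y x = 0" using alt by (simp add: add.commute)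
  then show ?thesis by (simp add: eq_neg_iff_add_eq_0 add.commute)
qed

lemma nil2r: "br z (br x y) = 0" using anti nil2 by (metis neg_equal_0_iff_equal)

definition "G = span {br x y | x y. True}"

lemma G_sub: "subspace G" unfolding G_def by (rule subspace_span)

lemma br_in_G: "br x y \<in> G" unfolding G_def by (rule span_base) blast

lemma G_central: assumes "g \<in> G" shows "br g z = 0"
proof -
  have "subspace {g. br g z = 0}"
    unfolding subspace_def by (auto simp: brs)
  moreover have "{br x y | x y. True} \<subseteq> {g. br g z = 0}" by (auto simp: nil2)
  ultimately have "G \<subseteq> {g. br g z = 0}" unfolding G_def by (rule span_minimal[rotated])
  then show ?thesis using assms by auto
qed

lemma G_central2: assumes "g \<in> G" shows "br z g = 0"
  using G_central[OF assms, of z] anti by (metis neg_equal_0_iff_equal)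

definition NJ :: "('v \<Rightarrow> 'v) \<Rightarrow> 'v \<Rightarrow> 'v \<Rightarrow> 'v" where
  "NJ J x y = br x y + J (br (J x) y + br x (J y)) - br (J x) (J y)"


lemmas lin = linear_add linear_scale linear_neg linear_diff linear_0

lemma NJ_bil: assumes "linear J" shows "bilinear (NJ J)"
  unfolding bilinear_def
proof (intro conjI allI)
  fix x show "linear (NJ J x)"
    by (rule linearI) (simp_all add: NJ_def brs lin[OF assms] algebra_simps)
next
  fix y show "linear (\<lambda>x. NJ J x y)"
    by (rule linearI) (simp_all add: NJ_def brs lin[OF assms] algebra_simps)
qed

lemma NJ_Jl: assumes "linear J" "\<And>x. J (J x) = - x"
  shows "NJ J (J x) y = - J (NJ J x y)"
  by (simp add: NJ_def brs lin[OF assms(1)] assms(2) algebra_simps)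

lemma NJ_Jr: assumes "linear J" "\<And>x. J (J x) = - x"
  shows "NJ J x (J y) = - J (NJ J x y)"
  by (simp add: NJ_def brs lin[OF assms(1)] assms(2) algebra_simps)

lemma NJ_swap: assumes "linear J" shows "NJ J y x = - NJ J x y"
  apply (simp add: NJ_def lin[OF assms(1)] algebra_simps)
  apply (subst anti[of y x], subst anti[of "J y" x], subst anti[of y "J x"], subst anti[of "J y" "J x"])
  by (simp add: lin[OF assms(1)] algebra_simps)

lemma NJ_diag: assumes "linear J" shows "NJ J x x = 0"
proof -
  have "NJ J x x + NJ J x x = 0" using NJ_swap[OF assms, of x x] by (metis eq_neg_iff_add_eq_0)
  then have "(2::real) *\<^sub>R NJ J x x = 0" by (simp add: scaleR_2)
  then show ?thesis by simp
qed

lemma span_card6: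
  fixes S :: "'v set"
  assumes fin: "finite S" and c: "card S \<le> 6" and sp: "span S = UNIV" and d6: "DIM('v) = 6"
  shows "card S = 6" "independent S"
proof -
  have "dim (UNIV::'v set) \<le> card S" using dim_le_card[of UNIV S] sp fin by simp
  then have c6: "6 \<le> card S" using d6 by (simp add: dim_UNIV)
  then show "card S = 6" using c by linarith
  show "independent S"
    by (rule card_le_dim_spanning[of S UNIV]) (use sp c d6 fin in \<open>auto simp: dim_UNIV\<close>)
qed

lemma span6:
  fixes v1 :: 'v
  assumes sp: "span {v1,v2,v3,v4,v5,v6} = UNIV" and d6: "DIM('v) = 6"
  shows "distinct [v1,v2,v3,v4,v5,v6]" "independent {v1,v2,v3,v4,v5,v6}"
proof -
  define xs where "xs = [v1,v2,v3,v4,v5,v6]"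
  have eq: "{v1,v2,v3,v4,v5,v6} = set xs" unfolding xs_def by simp
  have L: "length xs = 6" unfolding xs_def by simp
  have cl: "card (set xs) \<le> 6" using card_length[of xs] L by linarith
  have sp': "span (set xs) = UNIV" using sp eq by simp
  have "card (set xs) = length xs" using span_card6(1)[OF _ cl sp' d6] L by simp
  then show "distinct [v1,v2,v3,v4,v5,v6]" unfolding xs_def[symmetric] by (rule card_distinct)
  show "independent {v1,v2,v3,v4,v5,v6}" unfolding eq using span_card6(2)[OF _ cl sp' d6] by simp
qed


lemma NJ_all:
  assumes lJ: "linear J" and JJ: "\<And>x. J (J x) = - x"
    and sp: "span {v1, J v1, v3, J v3, v5, J v5} = UNIV"
    and n13: "NJ J v1 v3 = 0" and n15: "NJ J v1 v5 = 0" and n35: "NJ J v3 v5 = 0"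
  shows "NJ J x y = 0"
proof -
  have base: "NJ J a b = 0" if "a \<in> {v1,v3,v5}" "b \<in> {v1,v3,v5}" for a b
  proof -
    have s31: "NJ J v3 v1 = 0" using NJ_swap[OF lJ, of v3 v1] n13 by simp
    have s51: "NJ J v5 v1 = 0" using NJ_swap[OF lJ, of v5 v1] n15 by simp
    have s53: "NJ J v5 v3 = 0" using NJ_swap[OF lJ, of v5 v3] n35 by simp
    show ?thesis using that n13 n15 n35 s31 s51 s53 NJ_diag[OF lJ] by blast
  qed
  have ext: "NJ J a b = 0" if ain: "a \<in> {v1, J v1, v3, J v3, v5, J v5}" and bin: "b \<in> {v1, J v1, v3, J v3, v5, J v5}" for a b
  proof -
    obtain a0 where a0: "a0 \<in> {v1,v3,v5}" "a = a0 \<or> a = J a0" using ain by auto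
    obtain b0 where b0: "b0 \<in> {v1,v3,v5}" "b = b0 \<or> b = J b0" using bin by auto
    have z: "NJ J a0 b0 = 0" using base a0 b0 by auto
    have zz: "NJ J (J a0) b0 = 0" "NJ J a0 (J b0) = 0" "NJ J (J a0) (J b0) = 0"
      using z by (simp_all add: NJ_Jl[OF lJ JJ] NJ_Jr[OF lJ JJ] linear_0[OF lJ] linear_neg[OF lJ])
    show ?thesis using a0(2) b0(2) z zz by (elim disjE) simp_all
  qed
  have b0: "bilinear (\<lambda>x y. (0::'v))" unfolding bilinear_def by (simp add: linear_zero)
  have sub: "UNIV \<subseteq> span {v1, J v1, v3, J v3, v5, J v5}" using sp by simp
  show ?thesis using bilinear_eq[OF NJ_bil[OF lJ] b0 sub sub UNIV_I UNIV_I ext] by simp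
qed

lemma mkJ:
  fixes v1 :: 'v
  assumes sp: "span {v1,v2,v3,v4,v5,v6} = UNIV" and d6: "DIM('v) = 6"
    and H: "\<And>J. linear J \<Longrightarrow> J v1 = v2 \<Longrightarrow> J v2 = - v1 \<Longrightarrow> J v3 = v4 \<Longrightarrow> J v4 = - v3
       \<Longrightarrow> J v5 = v6 \<Longrightarrow> J v6 = - v5 \<Longrightarrow> NJ J v1 v3 = 0 \<and> NJ J v1 v5 = 0 \<and> NJ J v3 v5 = 0"
  shows "\<exists>J. complex_structure br J"
proof -
  note ds = span6(1)[OF sp d6] and ind = span6(2)[OF sp d6]
  define f where "f x = (if x = v1 then v2 else if x = v2 then -v1 else if x = v3 then v4
     else if x = v4 then -v3 else if x = v5 then v6 else -v5)" for x
  obtain J where lJ: "linear J" and ag: "\<forall>x\<in>{v1,v2,v3,v4,v5,v6}. J x = f x"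
    using linear_independent_extend[OF ind] by blast
  have dd: "v1 \<noteq> v2" "v1 \<noteq> v3" "v1 \<noteq> v4" "v1 \<noteq> v5" "v1 \<noteq> v6" "v2 \<noteq> v1" "v2 \<noteq> v3" "v2 \<noteq> v4" "v2 \<noteq> v5" "v2 \<noteq> v6" "v3 \<noteq> v1" "v3 \<noteq> v2" "v3 \<noteq> v4" "v3 \<noteq> v5" "v3 \<noteq> v6" "v4 \<noteq> v1" "v4 \<noteq> v2" "v4 \<noteq> v3" "v4 \<noteq> v5" "v4 \<noteq> v6" "v5 \<noteq> v1" "v5 \<noteq> v2" "v5 \<noteq> v3" "v5 \<noteq> v4" "v5 \<noteq> v6" "v6 \<noteq> v1" "v6 \<noteq> v2" "v6 \<noteq> v3" "v6 \<noteq> v4" "v6 \<noteq> v5" using ds by auto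
  have fv: "f v1 = v2" "f v2 = - v1" "f v3 = v4" "f v4 = - v3" "f v5 = v6" "f v6 = - v5"
    unfolding f_def using dd by simp_all
  have J1: "J v1 = v2" "J v2 = - v1" "J v3 = v4" "J v4 = - v3" "J v5 = v6" "J v6 = - v5"
    using ag fv by simp_all
  have lm: "linear (\<lambda>x::'v. - x)" by (rule linearI) auto
  have JJ: "J (J x) = - x" for x
  proof -
    have "(J \<circ> J) x = (\<lambda>x. - x) x"
      apply (rule linear_eq_on_span[of "J \<circ> J" "\<lambda>x. - x" "{v1,v2,v3,v4,v5,v6}"])
      using linear_compose[OF lJ lJ] lm sp apply simp_all
      using J1 linear_neg[OF lJ] by auto
    then show ?thesis by simp
  qed
  from H[OF lJ J1] have n: "NJ J v1 v3 = 0" "NJ J v1 v5 = 0" "NJ J v3 v5 = 0" by auto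
  have sp': "span {v1, J v1, v3, J v3, v5, J v5} = UNIV" using sp J1 by simp
  have "NJ J x y = 0" for x y by (rule NJ_all[OF lJ JJ sp' n])
  then show ?thesis unfolding complex_structure_def NJ_def[symmetric] using lJ JJ by blast
qed


lemma cs_D: assumes "complex_structure br J"
  shows "linear J" "\<And>x. J (J x) = - x" "\<And>x y. NJ J x y = 0"
  using assms unfolding complex_structure_def NJ_def by auto

lemma asc1: "asc_series br J 1 = {x. (\<forall>y. br x y = 0) \<and> (\<forall>y. br (J x) y = 0)}"
  by (simp add: One_nat_def)

lemma asc2: "asc_series br J 2 = {x. (\<forall>y. br x y \<in> asc_series br J 1) \<and> (\<forall>y. br (J x) y \<in> asc_series br J 1)}"
  by (simp add: numeral_2_eq_2 One_nat_def)

lemma asc3': "asc_series br J 3 = {x. (\<forall>y. br x y \<in> asc_series br J 2) \<and> (\<forall>y. br (J x) y \<in> asc_series br J 2)}"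
  by (simp add: numeral_3_eq_3 numeral_2_eq_2 One_nat_def)

lemma NJ_central: assumes cs: "complex_structure br J" shows "J (br (J (br u v)) y) = br (J (br u v)) (J y)"
proof -
  have "NJ J (br u v) y = 0" using cs_D(3)[OF cs] .
  then show ?thesis by (simp add: NJ_def nil2)
qed

lemma asc3: assumes cs: "complex_structure br J" shows "asc_series br J 3 = UNIV"
proof -
  note lJ = cs_D(1)[OF cs]
  have c2: "br u v \<in> asc_series br J 2" for u v
    unfolding asc2 asc1 using NJ_central[OF cs] by (simp add: nil2 lin[OF lJ] brs)
  show ?thesis unfolding asc3' using c2 by auto
qed

lemma step3_iff: assumes cs: "complex_structure br J" and nz: "br x0 y0 \<noteq> 0"
  shows "step_cs br J 3 \<longleftrightarrow> asc_series br J 2 \<noteq> UNIV"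
proof -
  have "asc_series br J 1 \<noteq> UNIV" using nz unfolding asc1 by auto
  moreover have "0 < s \<and> s < 3 \<longleftrightarrow> s = 1 \<or> s = (2::nat)" for s by auto
  ultimately show ?thesis unfolding step_cs_def using asc3[OF cs] by auto
qed

lemma G3: assumes cs: "complex_structure br J" and ne: "asc_series br J 2 \<noteq> UNIV"
  shows "\<exists>T. T \<subseteq> G \<and> independent T \<and> card T = 3"
proof -
  note lJ = cs_D(1)[OF cs] and JJ = cs_D(2)[OF cs]
  obtain p where "p \<notin> asc_series br J 2" using ne by auto
  then obtain y where "br p y \<notin> asc_series br J 1 \<or> br (J p) y \<notin> asc_series br J 1"
    unfolding asc2 by blast
  then obtain u v where w: "br u v \<notin> asc_series br J 1" by blast
  define w where "w = br u v"
  obtain y0 where s0: "br (J w) y0 \<noteq> 0" using w unfolding asc1 w_def by (auto simp: nil2)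
  define s where "s = br (J w) y0"
  have Js: "J s = br (J w) (J y0)" unfolding s_def w_def by (rule NJ_central[OF cs])
  have sG: "s \<in> G" "J s \<in> G" "w \<in> G" unfolding s_def w_def using Js br_in_G by (auto simp: s_def w_def)
  have i1: "independent {s}" using s0 by (simp add: s_def independent_insert)
  have i2: "J s \<notin> span {s}"
  proof
    assume "J s \<in> span {s}"
    then obtain k where k: "J s = k *\<^sub>R s" by (auto simp: span_singleton)
    then have "J (J s) = k *\<^sub>R J s" using lin[OF lJ] by simp
    then have "- s = k *\<^sub>R (k *\<^sub>R s)" using k JJ[of s] by metis
    then have "- s = (k * k) *\<^sub>R s" by simp
    then have "(1 + k * k) *\<^sub>R s = 0" by (simp add: algebra_simps) (metis add.commute eq_neg_iff_add_eq_0)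
    moreover have "1 + k * k \<noteq> 0" by (metis add_pos_nonneg less_numeral_extra(1) less_numeral_extra(3) zero_le_square)
    ultimately show False using s0 s_def by simp
  qed
  have i3: "w \<notin> span {J s, s}"
  proof
    assume "w \<in> span {J s, s}"
    then obtain k1 k2 where k: "w = k1 *\<^sub>R J s + k2 *\<^sub>R s"
      by (auto simp: span2_iff)
    then have "J w = k1 *\<^sub>R J (J s) + k2 *\<^sub>R J s" using lin[OF lJ] by simp
    then have "br (J w) y0 = 0" using JJ G_central sG by (simp add: brs)
    then show False using s0 by simp
  qed
  have ind: "independent {w, J s, s}"
    using i1 i2 i3 by (simp add: independent_insertI)
  have "w \<notin> {J s, s}" using i3 span_base[of w "{J s, s}"] by blast
  have "J s \<noteq> s" using i2 span_base[of s "{s}"] by auto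
  then have "card {w, J s, s} = 3" using \<open>w \<notin> {J s, s}\<close> by auto
  then show ?thesis using ind sG by (intro exI[of _ "{w, J s, s}"]) auto
qed

end



lemma inv_linear: assumes lf: "linear f" and bf: "bij f" shows "linear (inv f)"
proof -
  have fi: "f (inv f x) = x" for x using bf by (simp add: bij_is_surj surj_f_inv_f)
  have if': "inv f (f x) = x" for x using bf by (simp add: bij_is_inj)
  show ?thesis
  proof (rule linearI)
    fix x y show "inv f (x + y) = inv f x + inv f y"
      by (metis fi if' linear_add[OF lf])
  next
    fix c x show "inv f (c *\<^sub>R x) = c *\<^sub>R inv f x"
      by (metis fi if' linear_scale[OF lf])
  qed
qed

lemma transport:
  fixes f :: "'a::real_vector \<Rightarrow> 'b::real_vector"
  assumes lf: "linear f" and bf: "bij f" and hom: "\<And>x y. f (br1 x y) = br2 (f x) (f y)"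
    and cs: "complex_structure br2 J2"
  shows "complex_structure br1 (\<lambda>x. inv f (J2 (f x)))"
    and "asc_series br1 (\<lambda>x. inv f (J2 (f x))) k = f -` asc_series br2 J2 k"
    and "step_cs br1 (\<lambda>x. inv f (J2 (f x))) t \<longleftrightarrow> step_cs br2 J2 t"
proof -
  define J where "J = (\<lambda>x. inv f (J2 (f x)))"
  have fi: "f (inv f x) = x" for x using bf by (simp add: bij_is_surj surj_f_inv_f)
  have if': "inv f (f x) = x" for x using bf by (simp add: bij_is_inj)
  have inj: "inj f" using bf bij_is_inj by blast
  have li: "linear (inv f)" by (rule inv_linear[OF lf bf])
  have lJ2: "linear J2" and JJ2: "\<And>x. J2 (J2 x) = - x"
    and N2: "\<And>x y. br2 x y + J2 (br2 (J2 x) y + br2 x (J2 y)) - br2 (J2 x) (J2 y) = 0"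
    using cs unfolding complex_structure_def by auto
  have fJ: "f (J x) = J2 (f x)" for x unfolding J_def fi ..
  have lJ: "linear J" unfolding J_def
    using linear_compose[OF linear_compose[OF lf lJ2] li] by (simp add: o_def)
  have JJ: "J (J x) = - x" for x
    unfolding J_def fi JJ2 using linear_neg[OF li] if' by simp
  have N: "br1 x y + J (br1 (J x) y + br1 x (J y)) - br1 (J x) (J y) = 0" for x y
  proof -
    have "f (br1 x y + J (br1 (J x) y + br1 x (J y)) - br1 (J x) (J y)) = 0"
      using N2[of "f x" "f y"] by (simp add: linear_add[OF lf] linear_diff[OF lf] fJ hom)
    then show ?thesis using inj linear_0[OF lf] by (metis injD)
  qed
  show "complex_structure br1 (\<lambda>x. inv f (J2 (f x)))"
    unfolding complex_structure_def J_def[symmetric] using lJ JJ N by blast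
  have asc: "asc_series br1 J k = f -` asc_series br2 J2 k" for k
  proof (induction k)
    case 0
    show ?case using inj linear_0[OF lf] by (auto simp: inj_eq[OF inj, of _ 0, simplified linear_0[OF lf]])
  next
    case (Suc k)
    have "x \<in> asc_series br1 J (Suc k) \<longleftrightarrow> f x \<in> asc_series br2 J2 (Suc k)" for x
    proof -
      have "x \<in> asc_series br1 J (Suc k) \<longleftrightarrow>
          (\<forall>y. br2 (f x) (f y) \<in> asc_series br2 J2 k) \<and> (\<forall>y. br2 (J2 (f x)) (f y) \<in> asc_series br2 J2 k)"
        using Suc by (simp add: hom fJ)
      also have "\<dots> \<longleftrightarrow> (\<forall>y. br2 (f x) y \<in> asc_series br2 J2 k) \<and> (\<forall>y. br2 (J2 (f x)) y \<in> asc_series br2 J2 k)"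
        by (metis fi)
      finally show ?thesis by simp
    qed
    then show ?case by auto
  qed
  then show "asc_series br1 (\<lambda>x. inv f (J2 (f x))) k = f -` asc_series br2 J2 k" unfolding J_def .
  have "asc_series br1 J s = UNIV \<longleftrightarrow> asc_series br2 J2 s = UNIV" for s
    unfolding asc using bf by (metis UNIV_I bij_is_surj fi subsetI subset_antisym vimage_UNIV vimage_eq)
  then show "step_cs br1 (\<lambda>x. inv f (J2 (f x))) t \<longleftrightarrow> step_cs br2 J2 t"
    unfolding step_cs_def J_def[symmetric] by simp
qed



lemma f3_simp: "f3_bracket p q = (0, vector [fst p$1 * fst q$2 - fst p$2 * fst q$1,
   fst p$1 * fst q$3 - fst p$3 * fst q$1, fst p$2 * fst q$3 - fst p$3 * fst q$2])"
  by (simp add: f3_bracket_def Let_def)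

lemma f3_bil: "bilinear f3_bracket"
  unfolding bilinear_def
  by (auto intro!: linearI simp: f3_simp vec_eq_iff forall_3 vector_3 algebra_simps)

lemma f3_alt: "f3_bracket x x = 0"
  by (simp add: f3_simp vec_eq_iff forall_3 vector_3 zero_prod_def)

lemma f3_nil2: "f3_bracket (f3_bracket x y) z = 0"
  by (simp add: f3_simp vec_eq_iff forall_3 vector_3 zero_prod_def)

interpretation f3: tsn f3_bracket
  by unfold_locales (auto simp: f3_bil f3_alt f3_nil2)

definition J0 :: "(real^3) \<times> (real^3) \<Rightarrow> (real^3) \<times> (real^3)" where
  "J0 x = (vector [- snd x $3, fst x $3, - fst x $2], vector [snd x $2, - snd x $1, fst x $1])"

lemma J0_cs: "complex_structure f3_bracket J0"
  unfolding complex_structure_def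
proof (intro conjI allI)
  show "linear J0"
    by (rule linearI) (auto simp: J0_def vec_eq_iff forall_3 vector_3)
next
  fix x show "J0 (J0 x) = - x"
    by (simp add: J0_def vec_eq_iff forall_3 vector_3 prod_eq_iff)
next
  fix x y show "f3_bracket x y + J0 (f3_bracket (J0 x) y + f3_bracket x (J0 y)) - f3_bracket (J0 x) (J0 y) = 0"
    by (simp add: J0_def f3_simp vec_eq_iff forall_3 vector_3 prod_eq_iff algebra_simps)
qed

lemma no_cs_R3:
  fixes M :: "real^3 \<Rightarrow> real^3"
  assumes lM: "linear M" and MM: "\<And>q. M (M q) = - q"
  shows False
proof -
  have "matrix M ** matrix M = matrix (M \<circ> M)" using matrix_compose[OF lM lM] by simp
  also have "M \<circ> M = (\<lambda>q. - q)" using MM by (auto simp: fun_eq_iff)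
  finally have "det (matrix M) * det (matrix M) = det (matrix (\<lambda>q::real^3. - q))"
    by (metis det_mul)
  also have "det (matrix (\<lambda>q::real^3. - q)) = -1"
    by (simp add: det_3 matrix_def axis_def)
  finally have "det (matrix M) * det (matrix M) = -1" .
  moreover have "det (matrix M) * det (matrix M) \<ge> 0" by simp
  ultimately show False by linarith
qed


lemma f3_central_fst: assumes "\<And>z. f3_bracket c z = 0" shows "fst c = 0"
proof -
  have a: "f3_bracket c (vector [1,0,0], 0) = 0" "f3_bracket c (vector [0,1,0], 0) = 0" using assms by auto
  then show ?thesis by (simp add: f3_simp vec_eq_iff forall_3 vector_3 zero_prod_def)
qed

lemma f3_step: assumes cs: "complex_structure f3_bracket J" shows "step_cs f3_bracket J 3"
proof -
  note lJ = f3.cs_D(1)[OF cs] and JJ = f3.cs_D(2)[OF cs]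
  have nz: "f3_bracket (vector [1,0,0], 0) (vector [0,1,0], 0) \<noteq> 0"
    by (simp add: f3_simp vec_eq_iff forall_3 vector_3 zero_prod_def)
  have "asc_series f3_bracket J 2 \<noteq> UNIV"
  proof
    assume a2: "asc_series f3_bracket J 2 = UNIV"
    have c: "fst (J (f3_bracket x y)) = 0" for x y
    proof -
      have "f3_bracket x y \<in> asc_series f3_bracket J 1" using a2 unfolding f3.asc2 by blast
      then show ?thesis unfolding f3.asc1 by (auto intro: f3_central_fst)
    qed
    define E1 :: "(real^3) \<times> (real^3)" where "E1 = (0, vector [1,0,0])"
    define E2 :: "(real^3) \<times> (real^3)" where "E2 = (0, vector [0,1,0])"
    define E3 :: "(real^3) \<times> (real^3)" where "E3 = (0, vector [0,0,1])"
    have "E1 = f3_bracket (vector [1,0,0], 0) (vector [0,1,0], 0)"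
         "E2 = f3_bracket (vector [1,0,0], 0) (vector [0,0,1], 0)"
         "E3 = f3_bracket (vector [0,1,0], 0) (vector [0,0,1], 0)"
      unfolding E1_def E2_def E3_def by (simp_all add: f3_simp vec_eq_iff forall_3 vector_3)
    then have cE: "fst (J E1) = 0" "fst (J E2) = 0" "fst (J E3) = 0" using c by metis+
    have dec: "(0, q) = (q$1) *\<^sub>R E1 + (q$2) *\<^sub>R E2 + (q$3) *\<^sub>R E3" for q
      unfolding E1_def E2_def E3_def by (simp add: vec_eq_iff forall_3 vector_3)
    have fz: "fst (J (0, q)) = 0" for q
      unfolding dec by (simp add: f3.lin[OF lJ] cE)
    define M where "M q = snd (J (0, q))" for q
    have JM: "J (0, q) = (0, M q)" for q using fz[of q] unfolding M_def by (metis prod.collapse)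
    have lM: "linear M"
      unfolding M_def
    proof (rule linearI)
      fix a b :: "real^3"
      show "snd (J (0, a + b)) = snd (J (0, a)) + snd (J (0, b))"
        using linear_add[OF lJ, of "(0,a)" "(0,b)"] by simp
    next
      fix r and a :: "real^3"
      show "snd (J (0, r *\<^sub>R a)) = r *\<^sub>R snd (J (0, a))"
        using linear_scale[OF lJ, of r "(0,a)"] by simp
    qed
    have "M (M q) = - q" for q
    proof -
      have "J (J (0, q)) = (0, M (M q))" using JM by simp
      then show ?thesis using JJ[of "(0,q)"] by simp
    qed
    then show False using no_cs_R3[OF lM] by blast
  qed
  then show ?thesis using f3.step3_iff[OF cs nz] by simp
qed



lemma indep6_coeffs:
  fixes v1 :: "'v::euclidean_space"
  assumes ds: "distinct [v1,v2,v3,v4,v5,v6]" and ind: "independent {v1,v2,v3,v4,v5,v6}"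
    and z: "c1 *\<^sub>R v1 + c2 *\<^sub>R v2 + c3 *\<^sub>R v3 + c4 *\<^sub>R v4 + c5 *\<^sub>R v5 + c6 *\<^sub>R v6 = 0"
  shows "c1 = 0 \<and> c2 = 0 \<and> c3 = 0 \<and> c4 = 0 \<and> c5 = 0 \<and> c6 = 0"
proof -
  define c where "c v = (if v = v1 then c1 else if v = v2 then c2 else if v = v3 then c3
     else if v = v4 then c4 else if v = v5 then c5 else c6)" for v
  have dd: "v1 \<noteq> v2" "v1 \<noteq> v3" "v1 \<noteq> v4" "v1 \<noteq> v5" "v1 \<noteq> v6" "v2 \<noteq> v3" "v2 \<noteq> v4" "v2 \<noteq> v5"
    "v2 \<noteq> v6" "v3 \<noteq> v4" "v3 \<noteq> v5" "v3 \<noteq> v6" "v4 \<noteq> v5" "v4 \<noteq> v6" "v5 \<noteq> v6" using ds by auto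
  have cv: "c v1 = c1" "c v2 = c2" "c v3 = c3" "c v4 = c4" "c v5 = c5" "c v6 = c6"
    unfolding c_def using dd by (simp_all add: eq_commute)
  have "(\<Sum>v\<in>{v1,v2,v3,v4,v5,v6}. c v *\<^sub>R v) = c v1 *\<^sub>R v1 + (c v2 *\<^sub>R v2 + (c v3 *\<^sub>R v3 + (c v4 *\<^sub>R v4 + (c v5 *\<^sub>R v5 + c v6 *\<^sub>R v6))))"
    using dd by (simp add: sum.insert)
  also have "\<dots> = 0" unfolding cv using z by (simp add: add.assoc)
  finally have "\<forall>v\<in>{v1,v2,v3,v4,v5,v6}. c v = 0" using ind unfolding independent_explicit by blast
  then show ?thesis using cv by auto
qed

context tsn
begin

lemma br3:
  assumes z: "z \<in> G" and z': "z' \<in> G"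
  shows "br (k1 *\<^sub>R a + k2 *\<^sub>R b + k3 *\<^sub>R c + z) (l1 *\<^sub>R a + l2 *\<^sub>R b + l3 *\<^sub>R c + z') =
     (k1 * l2 - k2 * l1) *\<^sub>R br a b + (k1 * l3 - k3 * l1) *\<^sub>R br a c + (k2 * l3 - k3 * l2) *\<^sub>R br b c"
proof -
  have ba: "br b a = - br a b" "br c a = - br a c" "br c b = - br b c"
    using anti[where x=a and y=b] anti[where x=a and y=c] anti[where x=b and y=c] by auto
  show ?thesis
    by (simp add: brs alt ba G_central[OF z] G_central2[OF z'] algebra_simps)
qed


lemma G_span_sub: "span T \<subseteq> G" if "T \<subseteq> G" using that G_sub by (simp add: span_minimal)

lemma iso_f3:
  assumes d6: "DIM('v) = 6" and TG: "T \<subseteq> G" and indT: "independent T" and cT: "card T = 3"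
  shows "lie_isomorphic br f3_bracket"
proof -
  obtain B where TB: "T \<subseteq> B" and indB: "independent B" and spB: "UNIV \<subseteq> span B"
    using maximal_independent_subset_extend[of T UNIV] indT by auto
  have finB: "finite B" and cB: "card B \<le> 6" using independent_bound[OF indB] d6 by auto
  have spB': "span B = UNIV" using spB by auto
  have cB6: "card B = 6" by (rule span_card6(1)[OF finB cB spB' d6])
  have finT: "finite T" using finB TB finite_subset by blast
  have "card (B - T) = 3" using card_Diff_subset[OF finT TB] cB6 cT by simp
  then obtain a b c where U: "B - T = {a,b,c}" by (auto simp: card_3_iff)
  define S3 where "S3 = {br a b, br a c, br b c}"
  have spT: "span T \<subseteq> G" by (rule G_span_sub[OF TG])
  have dec: "\<exists>k1 k2 k3 z. z \<in> G \<and> x = k1 *\<^sub>R a + k2 *\<^sub>R b + k3 *\<^sub>R c + z" for x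
  proof -
    have "B = {a,b,c} \<union> T" using U TB by auto
    then have "x \<in> span ({a,b,c} \<union> T)" using spB' by simp
    then obtain u t where u: "u \<in> span {a,b,c}" and t: "t \<in> span T" and x: "x = u + t"
      unfolding span_Un by blast
    obtain k1 k2 k3 where "u = k1 *\<^sub>R a + k2 *\<^sub>R b + k3 *\<^sub>R c" using u span3_iff by blast
    then show ?thesis using x t spT by blast
  qed
  have brS: "br x y \<in> span S3" for x y
  proof -
    obtain k1 k2 k3 z where z: "z \<in> G" and x: "x = k1 *\<^sub>R a + k2 *\<^sub>R b + k3 *\<^sub>R c + z" using dec by blast
    obtain l1 l2 l3 z' where z': "z' \<in> G" and y: "y = l1 *\<^sub>R a + l2 *\<^sub>R b + l3 *\<^sub>R c + z'" using dec by blast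
    show ?thesis unfolding x y br3[OF z z'] S3_def span3_iff by blast
  qed
  have GS: "G \<subseteq> span S3" unfolding G_def
    by (rule span_minimal) (use brS in \<open>auto intro: subspace_span\<close>)
  have "B \<subseteq> span ({a,b,c} \<union> S3)"
  proof
    fix x assume "x \<in> B"
    then have "x \<in> {a,b,c} \<or> x \<in> T" using U by blast
    moreover have "T \<subseteq> span ({a,b,c} \<union> S3)"
      using TG GS span_mono[of S3 "{a,b,c} \<union> S3"] by auto
    moreover have "{a,b,c} \<subseteq> span ({a,b,c} \<union> S3)" by (meson le_sup_iff span_superset)
    ultimately show "x \<in> span ({a,b,c} \<union> S3)" by blast
  qed
  then have "span B \<subseteq> span ({a,b,c} \<union> S3)" by (simp add: span_minimal)
  then have sp6: "span {a, b, c, br a b, br a c, br b c} = UNIV" using spB' unfolding S3_def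
    by (simp add: insert_commute) blast
  note ds = span6(1)[OF sp6 d6] and ind6 = span6(2)[OF sp6 d6]
  define g where "g pq = ((fst pq)$1) *\<^sub>R a + ((fst pq)$2) *\<^sub>R b + ((fst pq)$3) *\<^sub>R c +
      (((snd pq)$1) *\<^sub>R br a b + ((snd pq)$2) *\<^sub>R br a c + ((snd pq)$3) *\<^sub>R br b c)" for pq :: "(real^3) \<times> (real^3)"
  have lg: "linear g"
    by (rule linearI) (simp_all add: g_def algebra_simps)
  have ginj: "inj g"
    unfolding linear_injective_0[OF lg]
  proof (intro allI impI)
    fix pq :: "(real^3) \<times> (real^3)" assume "g pq = 0"
    then have "((fst pq)$1) *\<^sub>R a + ((fst pq)$2) *\<^sub>R b + ((fst pq)$3) *\<^sub>R c +
      ((snd pq)$1) *\<^sub>R br a b + ((snd pq)$2) *\<^sub>R br a c + ((snd pq)$3) *\<^sub>R br b c = 0"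
      unfolding g_def by (simp add: add.assoc)
    from indep6_coeffs[OF ds ind6 this] show "pq = 0"
      by (simp add: prod_eq_iff vec_eq_iff forall_3)
  qed
  have sub: "subspace (range g)" by (rule linear_subspace_image[OF lg subspace_UNIV])
  have "{a, b, c, br a b, br a c, br b c} \<subseteq> range g"
  proof -
    have "a = g (vector [1,0,0], 0)" "b = g (vector [0,1,0], 0)" "c = g (vector [0,0,1], 0)"
      "br a b = g (0, vector [1,0,0])" "br a c = g (0, vector [0,1,0])" "br b c = g (0, vector [0,0,1])"
      by (simp_all add: g_def vector_3)
    then show ?thesis by (metis empty_subsetI insert_subset rangeI)
  qed
  then have "range g = UNIV" using span_minimal[OF _ sub] sp6 by blast
  then have bg: "bij g" using ginj by (simp add: bij_def)
  define f where "f = inv g"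
  have lf: "linear f" unfolding f_def by (rule inv_linear[OF lg bg])
  have bf: "bij f" unfolding f_def by (rule bij_imp_bij_inv[OF bg])
  have gf: "g (f x) = x" for x unfolding f_def using bg by (simp add: bij_is_surj surj_f_inv_f)
  have fg: "f (g x) = x" for x unfolding f_def using bg by (simp add: bij_is_inj)
  have ghom: "br (g p) (g q) = g (f3_bracket p q)" for p q
  proof -
    have zG: "((snd p)$1) *\<^sub>R br a b + ((snd p)$2) *\<^sub>R br a c + ((snd p)$3) *\<^sub>R br b c \<in> G" for p :: "(real^3) \<times> (real^3)"
      using G_sub br_in_G by (intro subspace_add subspace_scale; auto)+
    show ?thesis
      unfolding g_def[of p] g_def[of q] br3[OF zG zG]
      by (simp add: g_def f3_simp vector_3)
  qed
  have "f (br x y) = f3_bracket (f x) (f y)" for x y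
    using ghom[of "f x" "f y"] gf fg by metis
  then show ?thesis unfolding lie_isomorphic_def using lf bf by blast
qed

end



lemma complement_exists:
  fixes S :: "'v::euclidean_space set"
  assumes finS: "finite S" and indS: "independent S"
    and dec: "\<And>v. \<exists>s w. s \<in> span S \<and> w \<in> W \<and> v = s + w"
  shows "\<exists>C. C \<subseteq> W \<and> finite C \<and> card C = DIM('v) - card S \<and> span (S \<union> C) = UNIV"
proof -
  obtain B where SB: "S \<subseteq> B" and BV: "B \<subseteq> S \<union> W" and indB: "independent B" and spB: "S \<union> W \<subseteq> span B"
    using maximal_independent_subset_extend[of S "S \<union> W"] indS by auto
  have spU: "span B = UNIV"
  proof -
    have "v \<in> span B" for v
    proof -
      obtain s w where s: "s \<in> span S" and w: "w \<in> W" and v: "v = s + w" using dec by blast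
      have "s \<in> span B" using s span_mono[OF SB] by blast
      moreover have "w \<in> span B" using w spB by blast
      ultimately show ?thesis unfolding v by (rule span_add)
    qed
    then show ?thesis by auto
  qed
  have finB: "finite B" and cB: "card B \<le> DIM('v)" using independent_bound[OF indB] by auto
  have "dim (UNIV::'v set) \<le> card B" using dim_le_card[of UNIV B] spU finB by simp
  then have cB': "card B = DIM('v)" using cB by (simp add: dim_UNIV)
  define C where "C = B - S"
  have "C \<subseteq> W" using BV unfolding C_def by blast
  moreover have "finite C" using finB unfolding C_def by simp
  moreover have "card C = DIM('v) - card S" unfolding C_def using card_Diff_subset[OF finS SB] cB' by simp
  moreover have "S \<union> C = B" unfolding C_def using SB by blast
  ultimately show ?thesis using spU by auto
qed

lemma card4_obtain: assumes "card C = 4" obtains a b c d where "C = {a,b,c,d}"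
proof -
  have "card C = Suc 3" using assms by simp
  then obtain a C' where "C = insert a C'" "card C' = 3" unfolding card_Suc_eq by blast
  then show ?thesis using that by (auto simp: card_3_iff)
qed

lemma card2_obtain: assumes "card C = 2" obtains a b where "C = {a,b}"
  using assms by (auto simp: card_2_iff)

context tsn
begin

definition om :: "'v \<Rightarrow> 'v \<Rightarrow> 'v \<Rightarrow> real" where "om e u v = (br u v \<bullet> e) / (e \<bullet> e)"

lemma om_eq: assumes "e \<noteq> 0" and "G \<subseteq> span {e}" shows "br u v = om e u v *\<^sub>R e"
proof -
  have "br u v \<in> span {e}" using assms br_in_G by blast
  then obtain k where k: "br u v = k *\<^sub>R e" by (auto simp: span1_iff)
  have "e \<bullet> e \<noteq> 0" using assms by simp
  then have "om e u v = k" unfolding om_def k by simp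
  then show ?thesis using k by simp
qed

lemma proj:
  assumes e0: "e \<noteq> 0" and Ge: "G \<subseteq> span {e}" and pq: "br p q = e"
  shows "br p (z - om e z q *\<^sub>R p + om e z p *\<^sub>R q) = 0" "br q (z - om e z q *\<^sub>R p + om e z p *\<^sub>R q) = 0"
proof -
  have qp: "br q p = - e" using anti[where x=p and y=q] pq by simp
  have "br p (z - om e z q *\<^sub>R p + om e z p *\<^sub>R q) = br p z + br z p"
    using om_eq[OF e0 Ge, of z p] by (simp add: brs alt pq)
  then show "br p (z - om e z q *\<^sub>R p + om e z p *\<^sub>R q) = 0" using anti[where x=p and y=z] by simp
  have "br q (z - om e z q *\<^sub>R p + om e z p *\<^sub>R q) = br q z + br z q"
    using om_eq[OF e0 Ge, of z q] by (simp add: brs alt qp)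
  then show "br q (z - om e z q *\<^sub>R p + om e z p *\<^sub>R q) = 0" using anti[where x=q and y=z] by simp
qed


lemma ind_sing: "independent {v} \<longleftrightarrow> v \<noteq> 0"
  by (simp add: independent_insert)

lemma exists_k1:
  assumes d6: "DIM('v) = 6" and nz: "br x y \<noteq> 0" and dG: "dim G \<le> 1"
  shows "\<exists>J. complex_structure br J"
proof -
  define e where "e = br x y"
  have e0: "e \<noteq> 0" using nz e_def by simp
  have Ge: "G \<subseteq> span {e}"
    by (rule card_ge_dim_independent) (use br_in_G e_def e0 dG in \<open>auto simp: ind_sing\<close>)
  have xy: "br x y = e" using e_def by simp
  define W where "W = {z. br x z = 0 \<and> br y z = 0}"
  have subW: "subspace W" unfolding W_def subspace_def by (auto simp: brs)
  define P where "P z = z - om e z y *\<^sub>R x + om e z x *\<^sub>R y" for z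
  have PW: "P z \<in> W" for z unfolding W_def P_def using proj[OF e0 Ge xy] by auto
  have decP: "z = (om e z y *\<^sub>R x - om e z x *\<^sub>R y) + P z" for z unfolding P_def by simp
  have yx: "br y x = - e" using anti[where x=x and y=y] xy by simp
  have y0: "y \<noteq> 0" using nz by (auto simp: brs)
  have xny: "x \<notin> span {y}"
  proof
    assume "x \<in> span {y}" then obtain k where "x = k *\<^sub>R y" by (auto simp: span1_iff)
    then have "br x y = 0" by (simp add: brs alt)
    then show False using nz by simp
  qed
  have indxy: "independent {x, y}" using y0 xny by (simp add: independent_insertI ind_sing)
  have "x \<noteq> y" using xny span_base[of y "{y}"] by auto
  then have cxy: "card {x,y} = 2" by simp
  show ?thesis
  proof (cases "\<forall>u\<in>W. \<forall>v\<in>W. br u v = 0")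
    case True
    have "\<exists>s w. s \<in> span {x,y} \<and> w \<in> W \<and> v = s + w" for v
    proof -
      have "om e v y *\<^sub>R x - om e v x *\<^sub>R y \<in> span {x,y}"
        unfolding span2_iff by (rule exI[of _ "om e v y"], rule exI[of _ "- om e v x"]) simp
      then show ?thesis using decP[of v] PW[of v] by blast
    qed
    then obtain C where CW: "C \<subseteq> W" and fC: "finite C" and cC: "card C = DIM('v) - card {x,y}"
        and spC: "span ({x,y} \<union> C) = UNIV"
      using complement_exists[of "{x,y}" W] indxy by blast
    have "card C = 4" using cC cxy d6 by simp
    then obtain w1 w2 w3 w4 where C: "C = {w1,w2,w3,w4}" by (rule card4_obtain)
    have wW: "w1 \<in> W" "w2 \<in> W" "w3 \<in> W" "w4 \<in> W" using CW C by auto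
    have sp: "span {x,y,w1,w2,w3,w4} = UNIV" using spC C by (simp add: insert_commute)
    show ?thesis
    proof (rule mkJ[OF sp d6])
      fix J :: "'v \<Rightarrow> 'v" assume lJ: "linear J" and J: "J x = y" "J y = - x" "J w1 = w2" "J w2 = - w1" "J w3 = w4" "J w4 = - w3"
      have z: "br x w1 = 0" "br x w2 = 0" "br x w3 = 0" "br x w4 = 0" "br y w1 = 0" "br y w2 = 0" "br y w3 = 0" "br y w4 = 0"
        using wW unfolding W_def by auto
      have z2: "br w1 w3 = 0" "br w2 w3 = 0" "br w1 w4 = 0" "br w2 w4 = 0" using True wW by auto
      show "NJ J x w1 = 0 \<and> NJ J x w3 = 0 \<and> NJ J w1 w3 = 0"
        unfolding NJ_def using J z z2 linear_0[OF lJ] by simp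
    qed
  next
    case False
    then obtain x' y' where x'W: "x' \<in> W" and y'W: "y' \<in> W" and nz': "br x' y' \<noteq> 0" by blast
    obtain cc where cc: "br x' y' = cc *\<^sub>R e" using om_eq[OF e0 Ge] by blast
    have cc0: "cc \<noteq> 0" using cc nz' by auto
    define x2 where "x2 = (1 / cc) *\<^sub>R x'"
    define y2 where "y2 = y'"
    have x2W: "x2 \<in> W" unfolding x2_def using x'W subW by (simp add: subspace_scale)
    have y2W: "y2 \<in> W" unfolding y2_def using y'W .
    have x2y2: "br x2 y2 = e" unfolding x2_def y2_def using cc cc0 by (simp add: brs)
    define W2 where "W2 = {z. z \<in> W \<and> br x2 z = 0 \<and> br y2 z = 0}"
    define P2 where "P2 z = z - om e z y2 *\<^sub>R x2 + om e z x2 *\<^sub>R y2" for z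
    have P2W: "P2 (P z) \<in> W2" for z
    proof -
      have "P2 (P z) \<in> W" unfolding P2_def using PW[of z] x2W y2W subW
        by (intro subspace_add subspace_diff subspace_scale; simp)
      then show ?thesis unfolding W2_def P2_def using proj[OF e0 Ge x2y2] by auto
    qed
    have dec2: "\<exists>s w. s \<in> span {x,y,x2,y2} \<and> w \<in> W2 \<and> v = s + w" for v
    proof -
      have "v = ((om e v y *\<^sub>R x - om e v x *\<^sub>R y) + (om e (P v) y2 *\<^sub>R x2 - om e (P v) x2 *\<^sub>R y2)) + P2 (P v)"
        using decP[of v] unfolding P2_def by (simp add: algebra_simps)
      moreover have "(om e v y *\<^sub>R x - om e v x *\<^sub>R y) + (om e (P v) y2 *\<^sub>R x2 - om e (P v) x2 *\<^sub>R y2) \<in> span {x,y,x2,y2}"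
        unfolding span4_iff
        by (rule exI[of _ "om e v y"], rule exI[of _ "- om e v x"], rule exI[of _ "om e (P v) y2"],
            rule exI[of _ "- om e (P v) x2"]) (simp add: algebra_simps)
      ultimately show ?thesis using P2W[of v] by blast
    qed
    have bxx2: "br x x2 = 0" "br x y2 = 0" "br y x2 = 0" "br y y2 = 0" using x2W y2W unfolding W_def by auto
    have i1: "y2 \<noteq> 0" using x2y2 e0 by (auto simp: brs)
    have i2: "x2 \<notin> span {y2}"
    proof
      assume "x2 \<in> span {y2}" then obtain k where "x2 = k *\<^sub>R y2" by (auto simp: span1_iff)
      then have "br x2 y2 = 0" by (simp add: brs alt)
      then show False using x2y2 e0 by simp
    qed
    have i3: "y \<notin> span {x2, y2}"
    proof
      assume "y \<in> span {x2, y2}" then obtain k1 k2 where "y = k1 *\<^sub>R x2 + k2 *\<^sub>R y2" by (auto simp: span2_iff)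
      then have "br x y = 0" using bxx2 by (simp add: brs)
      then show False using nz by simp
    qed
    have i4: "x \<notin> span {y, x2, y2}"
    proof
      assume "x \<in> span {y, x2, y2}" then obtain k1 k2 k3 where "x = k1 *\<^sub>R y + k2 *\<^sub>R x2 + k3 *\<^sub>R y2" by (auto simp: span3_iff)
      moreover have "br x2 y = 0" "br y2 y = 0" using anti[where x=y and y=x2] anti[where x=y and y=y2] bxx2 by auto
      ultimately have "br x y = 0" by (simp add: brs alt)
      then show False using nz by simp
    qed
    have indS: "independent {x,y,x2,y2}"
      using i1 i2 i3 i4 by (simp add: independent_insertI ind_sing)
    have nm: "x \<notin> {y,x2,y2}" "y \<notin> {x2,y2}" "x2 \<noteq> y2"
      using i2 i3 i4 span_base[of x "{y,x2,y2}"] span_base[of y "{x2,y2}"] span_base[of x2 "{y2}"] by auto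
    have cS: "card {x,y,x2,y2} = 4" using nm by simp
    obtain C where CW: "C \<subseteq> W2" and fC: "finite C" and cC: "card C = DIM('v) - card {x,y,x2,y2}"
        and spC: "span ({x,y,x2,y2} \<union> C) = UNIV"
      using complement_exists[of "{x,y,x2,y2}" W2] indS dec2 by blast
    have "card C = 2" using cC cS d6 by simp
    then obtain w5 w6 where C: "C = {w5,w6}" by (rule card2_obtain)
    have wW: "w5 \<in> W2" "w6 \<in> W2" using CW C by auto
    have sp: "span {x,y,x2,y2,w5,w6} = UNIV" using spC C by (simp add: insert_commute)
    show ?thesis
    proof (rule mkJ[OF sp d6])
      fix J :: "'v \<Rightarrow> 'v" assume lJ: "linear J" and J: "J x = y" "J y = - x" "J x2 = y2" "J y2 = - x2" "J w5 = w6" "J w6 = - w5"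
      have z: "br x w5 = 0" "br x w6 = 0" "br y w5 = 0" "br y w6 = 0"
        "br x2 w5 = 0" "br x2 w6 = 0" "br y2 w5 = 0" "br y2 w6 = 0"
        using wW unfolding W2_def W_def by auto
      show "NJ J x x2 = 0 \<and> NJ J x w5 = 0 \<and> NJ J x2 w5 = 0"
        unfolding NJ_def using J z bxx2 linear_0[OF lJ] by simp
    qed
  qed
qed

end



definition ind2 :: "'v::real_vector \<Rightarrow> 'v \<Rightarrow> bool" where
  "ind2 u v \<longleftrightarrow> (\<forall>s t. s *\<^sub>R u + t *\<^sub>R v = 0 \<longrightarrow> s = 0 \<and> t = 0)"

lemma ind2D: "ind2 u v \<Longrightarrow> s *\<^sub>R u + t *\<^sub>R v = 0 \<Longrightarrow> s = 0 \<and> t = 0"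
  unfolding ind2_def by blast

lemma not_ind2: assumes "\<not> ind2 u v" "u \<noteq> 0" shows "\<exists>k. v = k *\<^sub>R u"
proof -
  obtain s t where st: "s *\<^sub>R u + t *\<^sub>R v = 0" "\<not> (s = 0 \<and> t = 0)" using assms unfolding ind2_def by blast
  have t0: "t \<noteq> 0" using st assms by auto
  have "t *\<^sub>R v = - (s *\<^sub>R u)" using st(1) by (metis add.commute eq_neg_iff_add_eq_0)
  then have "(1/t) *\<^sub>R (t *\<^sub>R v) = (1/t) *\<^sub>R (- (s *\<^sub>R u))" by simp
  then have "v = (- s / t) *\<^sub>R u" using t0 by simp
  then show ?thesis by blast
qed

lemma ind2_indep: assumes "ind2 u v" shows "u \<noteq> v" "independent {u, v}" "u \<noteq> 0" "v \<noteq> 0"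
proof -
  show "u \<noteq> v" using ind2D[OF assms, of 1 "-1"] by auto
  show u0: "u \<noteq> 0" using ind2D[OF assms, of 1 0] by auto
  show v0: "v \<noteq> 0" using ind2D[OF assms, of 0 1] by auto
  have "u \<notin> span {v}"
  proof
    assume "u \<in> span {v}" then obtain k where "u = k *\<^sub>R v" by (auto simp: span1_iff)
    then show False using ind2D[OF assms, of 1 "-k"] by auto
  qed
  then show "independent {u, v}" using v0 by (simp add: independent_insertI independent_insert)
qed

lemma det_choice:
  fixes a1 a2 b1 b2 :: real
  shows "\<exists>t\<in>{1,2,3::real}. (1 - t * a1) * (1 + t * b2) + t * t * (a2 * b1) \<noteq> 0"
proof (rule ccontr)
  assume "\<not> ?thesis"
  then have h: "(1 - t * a1) * (1 + t * b2) + t * t * (a2 * b1) = 0" if "t \<in> {1,2,3}" for t using that by blast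
  define P where "P = b2 - a1"
  define Q where "Q = a2 * b1 - a1 * b2"
  have e: "(1 - t * a1) * (1 + t * b2) + t * t * (a2 * b1) = 1 + t * P + t * t * Q" for t
    unfolding P_def Q_def by (simp add: algebra_simps)
  have h1: "1 + 1 * P + 1 * 1 * Q = 0" using h[of 1] e[of 1] by simp
  have h2: "1 + 2 * P + 2 * 2 * Q = 0" using h[of 2] e[of 2] by simp
  have h3: "1 + 3 * P + 3 * 3 * Q = 0" using h[of 3] e[of 3] by simp
  from h1 h2 h3 have "1 + P + Q = 0" "1 + 2 * P + 4 * Q = 0" "1 + 3 * P + 9 * Q = 0" by simp_all
  then show False by linarith
qed


context tsn
begin

lemma G_le_span: assumes "\<And>x y. br x y \<in> span W" shows "G \<subseteq> span W"
  unfolding G_def by (rule span_minimal) (use assms in \<open>auto intro: subspace_span\<close>)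

lemma ind2_step:
  assumes d6: "DIM('v) = 6" and dG: "dim G = 2"
  shows "\<exists>q1 q3 q4. ind2 (br q1 q3) (br q1 q4)"
proof -
  obtain x y where a0: "br x y \<noteq> 0"
  proof (rule ccontr)
    assume "\<not> thesis"
    then have "br x y \<in> span {}" for x y using that by (auto intro: span_zero)
    then have "G \<subseteq> span {}" by (rule G_le_span)
    then have "dim G \<le> card ({}::'v set)" by (rule dim_le_card) simp
    then show False using dG by simp
  qed
  define a where "a = br x y"
  have ana: "a \<noteq> 0" using a0 a_def by simp
  obtain z w where bn: "br z w \<notin> span {a}"
  proof (rule ccontr)
    assume "\<not> thesis"
    then have "br z w \<in> span {a}" for z w using that by blast
    then have "G \<subseteq> span {a}" by (rule G_le_span)
    then have "dim G \<le> card {a}" by (rule dim_le_card) simp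
    then show False using dG by simp
  qed
  define b where "b = br z w"
  have bnb: "b \<noteq> 0" using bn b_def span_zero[of "{a}"] by force
  have iab: "ind2 a b"
  proof (rule ccontr)
    assume "\<not> ind2 a b"
    then obtain k where "b = k *\<^sub>R a" using not_ind2 ana by blast
    then show False using bn b_def by (auto simp: span1_iff)
  qed
  show ?thesis
  proof (rule ccontr)
    assume "\<not> ?thesis"
    then have H: "\<not> ind2 (br p c) (br p d)" for p c d by blast
    obtain mu where mu: "br x w = mu *\<^sub>R a" using not_ind2[OF H[of x y w]] a_def ana by auto
    obtain la where la: "br z y = la *\<^sub>R b" using not_ind2[OF H[of z w y]] b_def bnb by auto
    have yx: "br y x = - a" using anti[where x=x and y=y] a_def by simp
    have wx: "br w x = - (mu *\<^sub>R a)" using anti[where x=x and y=w] mu by simp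
    have yz: "br y z = - (la *\<^sub>R b)" using anti[where x=z and y=y] la by simp
    have wz: "br w z = - b" using anti[where x=z and y=w] b_def by simp
    have lm: "la * mu = 1"
    proof -
      obtain s t where st: "s *\<^sub>R br (x+z) y + t *\<^sub>R br (x+z) w = 0" "\<not> (s = 0 \<and> t = 0)"
        using H[of "x+z" y w] unfolding ind2_def by blast
      have "(s + t * mu) *\<^sub>R a + (s * la + t) *\<^sub>R b = 0"
        using st(1) by (simp add: brs mu la a_def[symmetric] b_def[symmetric] algebra_simps)
      from ind2D[OF iab this] have "s + t * mu = 0" "s * la + t = 0" by auto
      then have tt: "t = - (s * la)" and ss: "s + t * mu = 0" by linarith+
      have "s * (1 - la * mu) = s + t * mu" unfolding tt by (simp add: algebra_simps)
      then have "s * (1 - la * mu) = 0" using ss by simp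
      moreover have "s \<noteq> 0" using st(2) tt by auto
      ultimately show ?thesis by simp
    qed
    have m1: "mu = -1 \<and> la = -1"
    proof -
      obtain s t where st: "s *\<^sub>R br (y+w) x + t *\<^sub>R br (y+w) z = 0" "\<not> (s = 0 \<and> t = 0)"
        using H[of "y+w" x z] unfolding ind2_def by blast
      have "(- s * (1 + mu)) *\<^sub>R a + (- t * (1 + la)) *\<^sub>R b = 0"
        using st(1) by (simp add: brs yx wx yz wz algebra_simps)
      from ind2D[OF iab this] have "s * (1 + mu) = 0" "t * (1 + la) = 0" by auto
      then have "1 + mu = 0 \<or> 1 + la = 0" using st(2) by auto
      then have "mu = -1 \<or> la = -1" by linarith
      then show ?thesis
      proof
        assume "mu = -1" then show ?thesis using lm by simp
      next
        assume "la = -1" then show ?thesis using lm by simp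
      qed
    qed
    have "ind2 (br (y-w) x) (br (y-w) z)"
      unfolding ind2_def
    proof (intro allI impI)
      fix s t assume st: "s *\<^sub>R br (y-w) x + t *\<^sub>R br (y-w) z = 0"
      have e1: "t *\<^sub>R b + t *\<^sub>R b = s *\<^sub>R a + s *\<^sub>R a"
        using st m1 by (simp add: brs yx wx yz wz algebra_simps)
      have ea: "(2 * s) *\<^sub>R a = s *\<^sub>R a + s *\<^sub>R a" by (metis scaleR_2 scaleR_scaleR)
      have eb: "(- (2 * t)) *\<^sub>R b = - (t *\<^sub>R b + t *\<^sub>R b)" by (metis scaleR_2 scaleR_scaleR scaleR_minus_left)
      have "(2 * s) *\<^sub>R a + (- (2 * t)) *\<^sub>R b = (s *\<^sub>R a + s *\<^sub>R a) - (t *\<^sub>R b + t *\<^sub>R b)"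
        unfolding ea eb by simp
      also have "\<dots> = 0" using e1 by simp
      finally have "(2 * s) *\<^sub>R a + (- (2 * t)) *\<^sub>R b = 0" .
      from ind2D[OF iab this] show "s = 0 \<and> t = 0" by auto
    qed
    then show False using H by blast
  qed
qed


lemma exists_k2:
  assumes d6: "DIM('v) = 6" and dG: "dim G = 2"
  shows "\<exists>J. complex_structure br J"
proof -
  obtain q1 q3 q4 where iAB: "ind2 (br q1 q3) (br q1 q4)" using ind2_step[OF d6 dG] by blast
  define A where "A = br q1 q3"
  define B where "B = br q1 q4"
  have iAB': "ind2 A B" using iAB A_def B_def by simp
  note AB = ind2_indep[OF iAB']
  have AG: "A \<in> G" "B \<in> G" unfolding A_def B_def by (rule br_in_G)+
  have GAB: "G \<subseteq> span {A,B}"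
    by (rule card_ge_dim_independent) (use AG AB dG in auto)
  have spABG: "span {A,B} \<subseteq> G" using AG by (intro G_span_sub) auto
  have j1: "q4 \<notin> span {A,B}"
  proof
    assume "q4 \<in> span {A,B}"
    then have "br q1 q4 = 0" using spABG G_central2 by blast
    then show False using AB B_def by simp
  qed
  have j2: "q3 \<notin> span {q4,A,B}"
  proof
    assume "q3 \<in> span {q4,A,B}"
    then obtain k g where g: "g \<in> span {A,B}" and q3: "q3 = k *\<^sub>R q4 + g" unfolding span_ins_iff by blast
    have "br q1 g = 0" using g spABG G_central2 by blast
    then have "A = k *\<^sub>R B" unfolding A_def B_def q3 by (simp add: brs)
    then have "1 *\<^sub>R A + (- k) *\<^sub>R B = 0" by simp
    from ind2D[OF iAB' this] show False by simp
  qed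
  have j3: "q1 \<notin> span {q3,q4,A,B}"
  proof
    assume "q1 \<in> span {q3,q4,A,B}"
    then obtain k3 y where y: "y \<in> span {q4,A,B}" and q1: "q1 = k3 *\<^sub>R q3 + y" unfolding span_ins_iff by blast
    then obtain k4 g where g: "g \<in> span {A,B}" and y': "y = k4 *\<^sub>R q4 + g" unfolding span_ins_iff by blast
    have gc: "br g q3 = 0" "br g q4 = 0" using g spABG G_central by blast+
    define C where "C = br q3 q4"
    have C': "br q4 q3 = - C" using anti[where x=q3 and y=q4] C_def by simp
    have eA: "A = (- k4) *\<^sub>R C" unfolding A_def q1 y' using gc C' by (simp add: brs alt)
    have eB: "B = k3 *\<^sub>R C" unfolding B_def q1 y' using gc C_def by (simp add: brs alt)
    have "k3 *\<^sub>R A + k4 *\<^sub>R B = 0" unfolding eA eB by (simp add: algebra_simps)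
    from ind2D[OF iAB' this] have "k3 = 0 \<and> k4 = 0" .
    then show False using eA AB by simp
  qed
  have ind5: "independent {q1,q3,q4,A,B}"
    by (rule independent_insertI[OF j3 independent_insertI[OF j2 independent_insertI[OF j1 AB(2)]]])
  have nm5: "q1 \<notin> {q3,q4,A,B}" "q3 \<notin> {q4,A,B}" "q4 \<notin> {A,B}"
    using j1 j2 j3 span_base[of q1 "{q3,q4,A,B}"] span_base[of q3 "{q4,A,B}"] span_base[of q4 "{A,B}"] by blast+
  have "card {A,B} = 2" using AB(1) by simp
  then have "card {q4,A,B} = 3" using nm5(3) by (simp add: card_insert_disjoint)
  then have "card {q3,q4,A,B} = 4" using nm5(2) by (simp add: card_insert_disjoint)
  then have c5: "card {q1,q3,q4,A,B} = 5" using nm5(1) by (simp add: card_insert_disjoint)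
  obtain q2 where q2: "q2 \<notin> span {q1,q3,q4,A,B}"
  proof (rule ccontr)
    assume "\<not> thesis"
    then have "UNIV \<subseteq> span {q1,q3,q4,A,B}" using that by blast
    then have "dim (UNIV::'v set) \<le> card {q1,q3,q4,A,B}" by (rule dim_le_card) simp
    then show False using c5 d6 by (simp add: dim_UNIV)
  qed
  have ind6: "independent {q2,q1,q3,q4,A,B}" by (rule independent_insertI[OF q2 ind5])
  have "q2 \<notin> {q1,q3,q4,A,B}" using q2 span_base[of q2 "{q1,q3,q4,A,B}"] by blast
  then have c6: "card {q2,q1,q3,q4,A,B} = 6" using c5 by (simp add: card_insert_disjoint)
  have sp6: "UNIV \<subseteq> span {q2,q1,q3,q4,A,B}"
    by (rule card_ge_dim_independent) (use ind6 c6 d6 in \<open>auto simp: dim_UNIV\<close>)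
  have "br q2 q4 \<in> span {A,B}" "br q2 q3 \<in> span {A,B}" using GAB br_in_G by blast+
  then obtain a1 a2 b1 b2 where ca: "br q2 q4 = a1 *\<^sub>R A + a2 *\<^sub>R B" and cb: "br q2 q3 = b1 *\<^sub>R A + b2 *\<^sub>R B"
    unfolding span2_iff by blast
  obtain t :: real where t: "t \<in> {1,2,3}" and D: "(1 - t * a1) * (1 + t * b2) + t * t * (a2 * b1) \<noteq> 0"
    using det_choice[of a1 b2 a2 b1] by blast
  have t0: "t \<noteq> 0" using t by auto
  define al where "al = A - t *\<^sub>R br q2 q4"
  define be where "be = B + t *\<^sub>R br q2 q3"
  have alG: "al \<in> G" "be \<in> G" unfolding al_def be_def using AG br_in_G G_sub
    by (auto intro: subspace_add subspace_diff subspace_scale)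
  have iab: "ind2 al be"
    unfolding ind2_def
  proof (intro allI impI)
    fix s r assume sr: "s *\<^sub>R al + r *\<^sub>R be = 0"
    define c1 where "c1 = s * (1 - t * a1) + r * t * b1"
    define c2 where "c2 = - s * t * a2 + r * (1 + t * b2)"
    have "c1 *\<^sub>R A + c2 *\<^sub>R B = s *\<^sub>R al + r *\<^sub>R be"
      unfolding al_def be_def ca cb c1_def c2_def by (simp add: algebra_simps)
    then have "c1 = 0 \<and> c2 = 0" using sr ind2D[OF iAB'] by simp
    moreover have "s * ((1 - t * a1) * (1 + t * b2) + t * t * (a2 * b1)) = (1 + t * b2) * c1 - t * b1 * c2"
      unfolding c1_def c2_def by (simp add: algebra_simps)
    moreover have "r * ((1 - t * a1) * (1 + t * b2) + t * t * (a2 * b1)) = t * a2 * c1 + (1 - t * a1) * c2"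
      unfolding c1_def c2_def by (simp add: algebra_simps)
    ultimately show "s = 0 \<and> r = 0" using D by simp
  qed
  note ab = ind2_indep[OF iab]
  have Gab: "G \<subseteq> span {al, be}"
    by (rule card_ge_dim_independent) (use alG ab dG in auto)
  define V where "V = {q1, t *\<^sub>R q2, q3, q4, be, - al}"
  have beV: "be \<in> span V" by (rule span_base) (simp add: V_def)
  have "- al \<in> span V" by (rule span_base) (simp add: V_def)
  then have alV: "al \<in> span V" using span_neg by fastforce
  have "{al, be} \<subseteq> span V" using alV beV by simp
  then have "span {al, be} \<subseteq> span V" by (simp add: span_minimal)
  then have ABV: "A \<in> span V" "B \<in> span V" using AG Gab by blast+
  have "q2 = (1/t) *\<^sub>R (t *\<^sub>R q2)" using t0 by simp
  moreover have "t *\<^sub>R q2 \<in> span V" unfolding V_def by (rule span_base) simp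
  ultimately have "q2 \<in> span V" by (metis span_mul)
  moreover have "q1 \<in> span V" "q3 \<in> span V" "q4 \<in> span V" by (rule span_base, simp add: V_def)+
  ultimately have "{q2,q1,q3,q4,A,B} \<subseteq> span V" using ABV by simp
  then have "span {q2,q1,q3,q4,A,B} \<subseteq> span V" by (simp add: span_minimal)
  then have spV: "span {q1, t *\<^sub>R q2, q3, q4, be, - al} = UNIV" using sp6 unfolding V_def by auto
  show ?thesis
  proof (rule mkJ[OF spV d6])
    fix J :: "'v \<Rightarrow> 'v" assume lJ: "linear J" and J: "J q1 = t *\<^sub>R q2" "J (t *\<^sub>R q2) = - q1" "J q3 = q4"
      "J q4 = - q3" "J be = - al" "J (- al) = - be"
    have e1: "br (t *\<^sub>R q2) q3 + br q1 q4 = be" unfolding be_def B_def by (simp add: brs add.commute)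
    have e2: "br q1 q3 - br (t *\<^sub>R q2) q4 = al" unfolding al_def A_def by (simp add: brs)
    have n13: "NJ J q1 q3 = 0"
    proof -
      have "NJ J q1 q3 = (br q1 q3 - br (t *\<^sub>R q2) q4) + J (br (t *\<^sub>R q2) q3 + br q1 q4)"
        unfolding NJ_def J by (simp add: algebra_simps)
      also have "\<dots> = 0" unfolding e1 e2 J by simp
      finally show ?thesis .
    qed
    have z: "br x be = 0" "br x al = 0" "br x (- al) = 0" for x
      using G_central2[OF alG(2)] G_central2[OF alG(1)] by (auto simp: brs)
    have n15: "NJ J q1 be = 0" and n35: "NJ J q3 be = 0"
      unfolding NJ_def J using z linear_0[OF lJ] by simp_all
    show "NJ J q1 q3 = 0 \<and> NJ J q1 be = 0 \<and> NJ J q3 be = 0" using n13 n15 n35 by blast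
  qed
qed

end



context tsn
begin

lemma exists_cs:
  assumes d6: "DIM('v) = 6" and nz: "br x0 y0 \<noteq> 0"
  shows "\<exists>J. complex_structure br J"
proof (cases "3 \<le> dim G")
  case True
  obtain B where BG: "B \<subseteq> G" and iB: "independent B" and GB: "G \<subseteq> span B" and cB: "card B = dim G"
    by (rule basis_exists)
  have "3 \<le> card B" using True cB by simp
  then obtain T where TB: "T \<subseteq> B" and cT: "card T = 3" and fT: "finite T" by (rule obtain_subset_with_card_n)
  have iT: "independent T" using independent_mono[OF iB TB] .
  have TG: "T \<subseteq> G" using TB BG by (rule order_trans)
  have "lie_isomorphic br f3_bracket" by (rule iso_f3[OF d6 TG iT cT])
  then obtain f where lf: "linear f" and bf: "bij f" and hom: "\<And>x y. f (br x y) = f3_bracket (f x) (f y)"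
    unfolding lie_isomorphic_def by blast
  show ?thesis by (rule exI, rule transport(1)[OF lf bf hom J0_cs])
next
  case False
  show ?thesis
  proof (cases "dim G = 2")
    case True then show ?thesis by (rule exists_k2[OF d6])
  next
    case False2: False
    then have "dim G \<le> 1" using False by linarith
    then show ?thesis by (rule exists_k1[OF d6 nz])
  qed
qed

end

lemma tsn_of: assumes "lie_algebra br" "two_step_nilpotent br" shows "tsn br"
  using assms unfolding lie_algebra_def two_step_nilpotent_def by unfold_locales auto

theorem mainTheorem10:
  fixes dummy :: "'v::euclidean_space itself"
  assumes "DIM('v) = 6"
  shows "(\<forall>br :: 'v \<Rightarrow> 'v \<Rightarrow> 'v. lie_algebra br \<and> two_step_nilpotent br \<longrightarrow>
            (\<exists>J. complex_structure br J))
       \<and> (\<forall>br :: 'v \<Rightarrow> 'v \<Rightarrow> 'v. lie_algebra br \<and> two_step_nilpotent br \<longrightarrow>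
            ((\<exists>J. complex_structure br J \<and> step_cs br J 3) \<longleftrightarrow> lie_isomorphic br f3_bracket))
       \<and> (\<forall>J. complex_structure f3_bracket J \<longrightarrow> step_cs f3_bracket J 3)"
proof (intro conjI allI impI)
  fix br :: "'v \<Rightarrow> 'v \<Rightarrow> 'v"
  assume h: "lie_algebra br \<and> two_step_nilpotent br"
  then interpret tsn br using tsn_of by blast
  obtain x0 y0 where nz: "br x0 y0 \<noteq> 0" using h unfolding two_step_nilpotent_def by blast
  show "\<exists>J. complex_structure br J" using exists_cs[OF assms nz] .
next
  fix br :: "'v \<Rightarrow> 'v \<Rightarrow> 'v"
  assume h: "lie_algebra br \<and> two_step_nilpotent br"
  then interpret tsn br using tsn_of by blast
  obtain x0 y0 where nz: "br x0 y0 \<noteq> 0" using h unfolding two_step_nilpotent_def by blast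
  show "(\<exists>J. complex_structure br J \<and> step_cs br J 3) \<longleftrightarrow> lie_isomorphic br f3_bracket"
  proof
    assume "\<exists>J. complex_structure br J \<and> step_cs br J 3"
    then obtain J where cs: "complex_structure br J" and st: "step_cs br J 3" by blast
    have "asc_series br J 2 \<noteq> UNIV" using st step3_iff[OF cs nz] by blast
    then obtain T where "T \<subseteq> G" "independent T" "card T = 3" using G3[OF cs] by blast
    then show "lie_isomorphic br f3_bracket" using iso_f3[OF assms] by blast
  next
    assume "lie_isomorphic br f3_bracket"
    then obtain f where lf: "linear f" and bf: "bij f" and hom: "\<And>x y. f (br x y) = f3_bracket (f x) (f y)"
      unfolding lie_isomorphic_def by blast
    have "complex_structure br (\<lambda>x. inv f (J0 (f x)))" by (rule transport(1)[OF lf bf hom J0_cs])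
    moreover have "step_cs br (\<lambda>x. inv f (J0 (f x))) 3"
      using transport(3)[OF lf bf hom J0_cs] f3_step[OF J0_cs] by blast
    ultimately show "\<exists>J. complex_structure br J \<and> step_cs br J 3" by blast
  qed
next
  fix J assume "complex_structure f3_bracket J"
  then show "step_cs f3_bracket J 3" by (rule f3_step)
qed


end
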